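(* Let $L\ge2$ and let $\mathcal H_1^L$ be the complete 1-constituent CCRN of length $L$ and order two. Then its number of complexes is $|\mathcal C_L|=\frac{(L+1)(L+2)}{2}-4$, its number of linkage classes is $\ell=2L-3$, the dimension of its stoichiometric subspace is $s=L-1$, and its deficiency is $\delta=|\mathcal C_L|-\ell-s=\frac{(L-1)(L-2)}{2}$.
   Context: The complete 1-constituent CCRN of length $L$ and order two has species set $\{\bar1,\dots,\bar L\}$ (cluster $\bar n$ has size $n$). A complex is a multiset of one or two species, written $\bar a$ or $\bar a+\bar b$, with size $a$, resp. $a+b$. The reaction set consists of all reactions $y\to y'$ between two distinct complexes $y\ne y'$ of width at most two having the same size (i.e. all $\bar a+\bar b\to\bar c+\bar d$ and $\bar a+\bar b\rightleftharpoons\bar c$ etc. with $a+b=c+d$, resp. $a+b=c$), so every reaction is reversible. The complex set $\mathcal C_L$ consists of the complexes that occur as input or output of at least one reaction. Linkage classes are the connected components of the (undirected) graph with vertex set $\mathcal C_L$ and an edge for each reaction. Each reaction $y\to y'$ has reaction vector $y'-y\in\mathbb Z^L$ (counting species multiplicities), the stoichiometric subspace is the span of all reaction vectors, $s$ is its dimension, and the deficiency is $\delta=|\mathcal C_L|-\ell-s$. *)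

theory Defs
  imports Complex_Main "HOL-Library.Multiset" "HOL-Library.Function_Algebras"
begin

text \<open>Complexes are multisets of species; species are the cluster sizes 1..L.
  Width at most two (one or two species).\<close>

definition cplx_size :: "nat multiset \<Rightarrow> nat" where
  "cplx_size y = sum_mset y"

definition width_le2_complexes :: "nat \<Rightarrow> nat multiset set" where
  "width_le2_complexes L =
     {y. set_mset y \<subseteq> {1..L} \<and> (size y = 1 \<or> size y = 2)}"

definition ccrn_reactions :: "nat \<Rightarrow> (nat multiset \<times> nat multiset) set" where
  "ccrn_reactions L =
     {(y, y'). y \<in> width_le2_complexes L \<and> y' \<in> width_le2_complexes L \<and>
               y \<noteq> y' \<and> cplx_size y = cplx_size y'}"

definition ccrn_complexes :: "nat \<Rightarrow> nat multiset set" where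
  "ccrn_complexes L = {y. \<exists>y'. (y, y') \<in> ccrn_reactions L \<or> (y', y) \<in> ccrn_reactions L}"

definition ccrn_linkage_classes :: "nat \<Rightarrow> nat multiset set set" where
  "ccrn_linkage_classes L =
     ccrn_complexes L // ((ccrn_reactions L \<union> (ccrn_reactions L)\<inverse>)\<^sup>*)"

text \<open>Reaction vector y' - y in R^L (species indexed by 1..L, as a function nat => real).\<close>
definition reaction_vector :: "nat multiset \<Rightarrow> nat multiset \<Rightarrow> (nat \<Rightarrow> real)" where
  "reaction_vector y y' = (\<lambda>i. real (count y' i) - real (count y i))"

definition fscale :: "real \<Rightarrow> (nat \<Rightarrow> real) \<Rightarrow> (nat \<Rightarrow> real)" where
  "fscale c f = (\<lambda>i. c * f i)"

definition ccrn_stoich_dim :: "nat \<Rightarrow> nat" where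
  "ccrn_stoich_dim L =
     vector_space.dim fscale ((\<lambda>(y, y'). reaction_vector y y') ` ccrn_reactions L)"

definition ccrn_deficiency :: "nat \<Rightarrow> int" where
  "ccrn_deficiency L = int (card (ccrn_complexes L)) - int (card (ccrn_linkage_classes L))
                        - int (ccrn_stoich_dim L)"

end

theory Submission
  imports Defs
begin


lemma size1_E: "size (y::'a multiset) = 1 \<Longrightarrow> \<exists>a. y = {#a#}"
  by (metis One_nat_def size_eq_Suc_imp_eq_union size_eq_0_iff_empty Suc_inject size_add_mset)

lemma size2_E: "size (y::'a multiset) = 2 \<Longrightarrow> \<exists>a b. y = {#a,b#}"
  by (metis numeral_2_eq_2 size_eq_Suc_imp_eq_union size_eq_0_iff_empty Suc_inject size_add_mset)

lemma mem_W: "y \<in> width_le2_complexes L \<longleftrightarrow>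
   (\<exists>a. 1\<le>a \<and> a\<le>L \<and> y = {#a#}) \<or> (\<exists>a b. 1\<le>a \<and> a\<le>b \<and> b\<le>L \<and> y = {#a,b#})"
proof
  assume h: "y \<in> width_le2_complexes L"
  then have s: "set_mset y \<subseteq> {1..L}" and "size y = 1 \<or> size y = 2"
    by (auto simp: width_le2_complexes_def)
  from \<open>size y = 1 \<or> size y = 2\<close> show "(\<exists>a. 1\<le>a \<and> a\<le>L \<and> y = {#a#}) \<or> (\<exists>a b. 1\<le>a \<and> a\<le>b \<and> b\<le>L \<and> y = {#a,b#})"
  proof
    assume "size y = 1" then obtain a where "y = {#a#}" using size1_E by blast
    then show ?thesis using s by auto
  next
    assume "size y = 2" then obtain a b where y: "y = {#a,b#}" using size2_E by blast
    show ?thesis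
    proof (cases "a \<le> b")
      case True then show ?thesis using s y by auto
    next
      case False
      have "y = {#b,a#}" using y by (simp add: add_mset_commute)
      then show ?thesis using s False by auto
    qed
  qed
next
  assume "(\<exists>a. 1\<le>a \<and> a\<le>L \<and> y = {#a#}) \<or> (\<exists>a b. 1\<le>a \<and> a\<le>b \<and> b\<le>L \<and> y = {#a,b#})"
  then show "y \<in> width_le2_complexes L" by (auto simp: width_le2_complexes_def)
qed

lemma pair_eq2: "{#a,b#} = {#c,d#} \<longleftrightarrow> (a = c \<and> b = d) \<or> (a = d \<and> b = c)"
proof
  assume h: "{#a,b#} = {#c,d#}"
  then have "a \<in># {#c,d#}" by (metis union_single_eq_member)
  then have "a = c \<or> a = d" by auto
  then show "(a = c \<and> b = d) \<or> (a = d \<and> b = c)"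
    using h by (auto simp: add_mset_commute)
qed (auto simp: add_mset_commute)

lemma sz1[simp]: "cplx_size {#a#} = a" by (simp add: cplx_size_def)
lemma sz2[simp]: "cplx_size {#a,b#} = a + b" by (simp add: cplx_size_def)

lemma mem_CC: "y \<in> ccrn_complexes L \<longleftrightarrow> y \<in> width_le2_complexes L \<and>
   (\<exists>y'\<in>width_le2_complexes L. y' \<noteq> y \<and> cplx_size y' = cplx_size y)"
  unfolding ccrn_complexes_def ccrn_reactions_def by auto

lemma CC_eq:
  assumes L: "L \<ge> 2"
  shows "ccrn_complexes L = width_le2_complexes L - {{#1#}, {#L-1,L#}, {#L,L#}}"
proof (intro set_eqI iffI)
  fix y assume "y \<in> ccrn_complexes L"
  then obtain y' where yW: "y \<in> width_le2_complexes L" and y'W: "y'\<in>width_le2_complexes L"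
    and ne: "y' \<noteq> y" and sz: "cplx_size y' = cplx_size y" unfolding mem_CC by blast
  have "y \<noteq> {#1#}"
  proof
    assume "y = {#1#}"
    then show False using y'W ne sz unfolding mem_W by auto
  qed
  moreover have "y \<noteq> {#L,L#}"
  proof
    assume y: "y = {#L,L#}"
    from y'W show False unfolding mem_W
    proof (elim disjE exE conjE)
      fix a assume "a\<le>L" "y' = {#a#}" "1 \<le> a" then show False using sz y L by auto
    next
      fix a b assume "1\<le>a" "a\<le>b" "b\<le>L" "y' = {#a,b#}" then have "a = L" "b = L" using sz y by auto
      then show False using \<open>y' = _\<close> y ne by auto
    qed
  qed
  moreover have "y \<noteq> {#L-1,L#}"
  proof
    assume y: "y = {#L-1,L#}"
    from y'W show False unfolding mem_W
    proof (elim disjE exE conjE)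
      fix a assume "a\<le>L" "y' = {#a#}" "1 \<le> a" then show False using sz y L by auto
    next
      fix a b assume "1\<le>a" "a\<le>b" "b\<le>L" "y' = {#a,b#}"
      then have "a = L - 1" "b = L" using sz y L by auto
      then show False using \<open>y' = _\<close> y ne by auto
    qed
  qed
  ultimately show "y \<in> width_le2_complexes L - {{#1#}, {#L-1,L#}, {#L,L#}}" using yW by auto
next
  fix y assume "y \<in> width_le2_complexes L - {{#1#}, {#L-1,L#}, {#L,L#}}"
  then have yW: "y \<in> width_le2_complexes L" and n: "y \<noteq> {#1#}" "y \<noteq> {#L-1,L#}" "y \<noteq> {#L,L#}"
    by auto
  from yW have "\<exists>y'\<in>width_le2_complexes L. y' \<noteq> y \<and> cplx_size y' = cplx_size y"
    unfolding mem_W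
  proof (elim disjE exE conjE)
    fix a assume a: "1\<le>a" "a\<le>L" "y = {#a#}"
    then have "a \<ge> 2" using n by (cases "a = 1") auto
    then show ?thesis using a
      by (intro bexI[of _ "{#1, a-1#}"]) (auto simp: width_le2_complexes_def)
  next
    fix a b assume ab: "1\<le>a" "a\<le>b" "b\<le>L" "y = {#a,b#}"
    consider "a + b \<le> L" | "a + b > L" "b < L" | "a + b > L" "b = L" using ab by linarith
    then show ?thesis
    proof cases
      case 1 then show ?thesis using ab
        by (intro bexI[of _ "{#a+b#}"]) (auto simp: width_le2_complexes_def)
    next
      case 2 then show ?thesis using ab
        by (intro bexI[of _ "{#a-1, b+1#}"]) (auto simp: width_le2_complexes_def pair_eq2)
    next
      case 3
      have "a \<noteq> L - 1" "a \<noteq> L" using n ab 3 by auto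
      then have "a + 1 \<le> L - 1" using ab 3 by linarith
      then show ?thesis using ab 3
        by (intro bexI[of _ "{#a+1, L-1#}"]) (auto simp: width_le2_complexes_def pair_eq2)
    qed
  qed
  then show "y \<in> ccrn_complexes L" using yW by (simp add: mem_CC)
qed



definition Pset :: "nat \<Rightarrow> (nat \<times> nat) set" where
  "Pset L = {(a,b). 1 \<le> a \<and> a \<le> b \<and> b \<le> L}"

lemma Pset_finite: "finite (Pset L)"
  by (rule finite_subset[of _ "{1..L} \<times> {1..L}"]) (auto simp: Pset_def)

lemma card_Pset: "card (Pset L) = L * (L + 1) div 2"
proof (induction L)
  case 0
  have "Pset 0 = {}" by (auto simp: Pset_def)
  then show ?case by simp
next
  case (Suc L)
  have eq: "Pset (Suc L) = Pset L \<union> (\<lambda>a. (a, Suc L)) ` {1..Suc L}"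
    by (auto simp: Pset_def)
  have d: "Pset L \<inter> (\<lambda>a. (a, Suc L)) ` {1..Suc L} = {}" by (auto simp: Pset_def)
  have "card (Pset (Suc L)) = card (Pset L) + card ((\<lambda>a. (a, Suc L)) ` {1..Suc L})"
    unfolding eq by (rule card_Un_disjoint) (use d Pset_finite in auto)
  also have "card ((\<lambda>a. (a, Suc L)) ` {1..Suc L}) = Suc L"
    by (subst card_image) (auto simp: inj_on_def)
  finally show ?case using Suc by simp
qed

lemma W_eq: "width_le2_complexes L = (\<lambda>a. {#a#}) ` {1..L} \<union> (\<lambda>(a,b). {#a,b#}) ` Pset L"
  apply (rule set_eqI)
  apply (simp only: mem_W Pset_def Un_iff image_iff)
  by fastforce

lemma card_W: "card (width_le2_complexes L) = L + L * (L + 1) div 2"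
proof -
  have d: "(\<lambda>a. {#a#}) ` {1..L} \<inter> (\<lambda>(a,b). {#a,b#}) ` Pset L = {}" by auto
  have i1: "card ((\<lambda>a. {#a#}) ` {1..L}) = L" by (subst card_image) (auto simp: inj_on_def)
  have i2: "card ((\<lambda>(a,b). {#a,b#}) ` Pset L) = card (Pset L)"
    by (rule card_image) (auto simp: inj_on_def Pset_def pair_eq2)
  show ?thesis unfolding W_eq
    by (subst card_Un_disjoint) (use d i1 i2 card_Pset Pset_finite in auto)
qed

lemma finite_W: "finite (width_le2_complexes L)"
  unfolding W_eq using Pset_finite by auto

lemma card_CC:
  assumes L: "L \<ge> 2"
  shows "card (ccrn_complexes L) = (L + 1) * (L + 2) div 2 - 4"
proof -
  have sub: "{{#1#}, {#L-1,L#}, {#L,L#}} \<subseteq> width_le2_complexes L"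
    using L by (auto simp: width_le2_complexes_def)
  have c3: "card {{#1#}, {#L-1,L#}, {#L,L#}} = (3::nat)"
    using L by (auto simp: pair_eq2)
  have "card (ccrn_complexes L) = card (width_le2_complexes L) - 3"
    unfolding CC_eq[OF L] using card_Diff_subset[OF _ sub] finite_subset[OF sub finite_W] c3
    by simp
  moreover have "(L + 1) * (L + 2) div 2 = L * (L + 1) div 2 + L + 1"
  proof -
    have "(L + 1) * (L + 2) = L * (L + 1) + 2 * (L + 1)" by (simp add: algebra_simps)
    then show ?thesis by simp
  qed
  ultimately show ?thesis using card_W[of L] by simp
qed

lemma R_sym: "(ccrn_reactions L)\<inverse> = ccrn_reactions L"
  by (auto simp: ccrn_reactions_def)

lemma R_star: "(x, y) \<in> (ccrn_reactions L)\<^sup>* \<longleftrightarrow> x = y \<or> (x, y) \<in> ccrn_reactions L"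
proof
  assume "(x, y) \<in> (ccrn_reactions L)\<^sup>*"
  then show "x = y \<or> (x, y) \<in> ccrn_reactions L"
    by (induction rule: rtrancl_induct) (auto simp: ccrn_reactions_def)
qed auto

definition K :: "nat \<Rightarrow> nat \<Rightarrow> nat multiset set" where
  "K L n = {y \<in> width_le2_complexes L. cplx_size y = n}"

lemma LC_eq: "ccrn_linkage_classes L = K L ` (cplx_size ` ccrn_complexes L)"
proof -
  have h: "(ccrn_reactions L)\<^sup>* `` {x} = K L (cplx_size x)" if x: "x \<in> ccrn_complexes L" for x
  proof -
    have "(ccrn_reactions L)\<^sup>* `` {x} = {y. y = x \<or> (x, y) \<in> ccrn_reactions L}"
      by (simp add: Image_def R_star, blast)
    also have "\<dots> = K L (cplx_size x)"
    proof -
      have xW: "x \<in> width_le2_complexes L" using x mem_CC by blast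
      show ?thesis using xW unfolding K_def ccrn_reactions_def by auto
    qed
    finally show ?thesis .
  qed
  have "ccrn_linkage_classes L = (\<Union>x\<in>ccrn_complexes L. {(ccrn_reactions L)\<^sup>* `` {x}})"
    unfolding ccrn_linkage_classes_def R_sym Un_absorb quotient_def ..
  also have "\<dots> = (\<lambda>x. K L (cplx_size x)) ` ccrn_complexes L"
    by (simp add: h) (rule set_eqI, simp add: image_iff)
  finally show ?thesis by (simp add: image_comp)
qed

lemma sizes_CC:
  assumes L: "L \<ge> 2"
  shows "cplx_size ` ccrn_complexes L = {2..2*L-2}"
proof (intro set_eqI iffI)
  fix n assume "n \<in> cplx_size ` ccrn_complexes L"
  then obtain y where y: "y \<in> ccrn_complexes L" "n = cplx_size y" by auto
  then have yW: "y \<in> width_le2_complexes L" and ne: "y \<noteq> {#1#}" "y \<noteq> {#L-1,L#}" "y \<noteq> {#L,L#}"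
    using CC_eq[OF L] by auto
  from yW show "n \<in> {2..2*L-2}" unfolding mem_W
  proof (elim disjE exE conjE)
    fix a assume "1\<le>a" "a\<le>L" "y = {#a#}" then show ?thesis using y ne L by auto
  next
    fix a b assume ab: "1\<le>a" "a\<le>b" "b\<le>L" "y = {#a,b#}"
    have "a + b \<le> 2*L-2"
    proof (cases "b = L")
      case True then have "a \<noteq> L - 1" "a \<noteq> L" using ne ab by auto
      then show ?thesis using ab True by linarith
    next
      case False then show ?thesis using ab by linarith
    qed
    then show ?thesis using y ab by auto
  qed
next
  fix n assume n: "n \<in> {2..2*L-2}"
  show "n \<in> cplx_size ` ccrn_complexes L"
  proof (cases "n \<le> L")
    case True
    have "{#n#} \<in> ccrn_complexes L" using n True L
      by (auto simp: CC_eq[OF L] width_le2_complexes_def)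
    then show ?thesis by force
  next
    case False
    have "{#n-L+1, L-1#} \<in> ccrn_complexes L" using n False L
      by (auto simp: CC_eq[OF L] width_le2_complexes_def pair_eq2)
    then show ?thesis using False L by force
  qed
qed

lemma card_LC:
  assumes L: "L \<ge> 2"
  shows "card (ccrn_linkage_classes L) = 2 * L - 3"
proof -
  have "inj_on (K L) (cplx_size ` ccrn_complexes L)"
  proof (rule inj_onI)
    fix m n assume "m \<in> cplx_size ` ccrn_complexes L" "n \<in> cplx_size ` ccrn_complexes L"
      and e: "K L m = K L n"
    then obtain y where "y \<in> ccrn_complexes L" "m = cplx_size y" by auto
    then have "y \<in> K L m" by (auto simp: K_def mem_CC)
    then show "m = n" using e by (auto simp: K_def)
  qed
  then have "card (ccrn_linkage_classes L) = card {2..2*L-2}"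
    unfolding LC_eq using card_image sizes_CC[OF L] by metis
  then show ?thesis using L by simp
qed



interpretation vs: vector_space fscale
  by unfold_locales (auto simp: fscale_def fun_eq_iff algebra_simps)

lemma sum_fun_apply': "(\<Sum>w\<in>t. (f w :: nat \<Rightarrow> real)) i = (\<Sum>w\<in>t. f w i)"
  by (induction t rule: infinite_finite_induct) auto

definition g :: "nat multiset \<Rightarrow> nat \<Rightarrow> real" where
  "g y = (\<lambda>i. real (count y i))"

definition v :: "nat \<Rightarrow> nat \<Rightarrow> real" where
  "v k = reaction_vector {#1, k-1#} {#k#}"

lemma rv_g: "reaction_vector y y' = g y' - g y"
  by (simp add: reaction_vector_def g_def fun_eq_iff)

lemma g_pair: "g {#a,b#} = g {#a#} + g {#b#}"
  by (simp add: g_def fun_eq_iff)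

lemma v_in_R: "2 \<le> k \<Longrightarrow> k \<le> L \<Longrightarrow> ({#1, k-1#}, {#k#}) \<in> ccrn_reactions L"
  by (auto simp: ccrn_reactions_def width_le2_complexes_def)

lemma single_span:
  assumes "1 \<le> a" "a \<le> L"
  shows "g {#a#} - fscale (real a) (g {#1#}) \<in> vs.span (v ` {2..L})"
  using assms
proof (induction a rule: nat_induct_at_least)
  case base
  have z: "g {#1#} - fscale (real 1) (g {#1#}) = 0" by (simp add: fscale_def fun_eq_iff)
  show ?case unfolding z by (rule vs.span_zero)
next
  case (Suc a)
  have "g {#Suc a#} - fscale (real (Suc a)) (g {#1#}) =
        v (Suc a) + (g {#a#} - fscale (real a) (g {#1#}))"
    by (auto simp: g_def v_def reaction_vector_def fscale_def fun_eq_iff algebra_simps)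
  moreover have "v (Suc a) \<in> vs.span (v ` {2..L})"
    using Suc by (intro vs.span_base) auto
  moreover have "g {#a#} - fscale (real a) (g {#1#}) \<in> vs.span (v ` {2..L})"
    using Suc.IH Suc.prems Suc.hyps by (meson Suc_leD)
  ultimately show ?case by (metis vs.span_add)
qed

lemma W_span:
  assumes "y \<in> width_le2_complexes L"
  shows "g y - fscale (real (cplx_size y)) (g {#1#}) \<in> vs.span (v ` {2..L})"
  using assms unfolding mem_W
proof (elim disjE exE conjE)
  fix a assume "1 \<le> a" "a \<le> L" "y = {#a#}" then show ?thesis using single_span by simp
next
  fix a b assume ab: "1 \<le> a" "a \<le> b" "b \<le> L" "y = {#a,b#}"
  have "g y - fscale (real (cplx_size y)) (g {#1#}) =
     (g {#a#} - fscale (real a) (g {#1#})) + (g {#b#} - fscale (real b) (g {#1#}))"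
    using ab by (simp add: g_pair fscale_def fun_eq_iff algebra_simps)
  then show ?thesis using ab single_span[of a L] single_span[of b L] by (simp add: vs.span_add)
qed

lemma v_at: "2 \<le> k \<Longrightarrow> v k i = (if i = k then 1 else 0) - (if i = 1 then 1 else 0) - (if i = k - 1 then 1 else 0)"
  by (simp add: v_def reaction_vector_def)

lemma indep: "vs.independent (v ` {2..L})"
proof
  assume "vs.dependent (v ` {2..L})"
  then obtain t u where t: "finite t" "t \<subseteq> v ` {2..L}" and s: "(\<Sum>w\<in>t. fscale (u w) w) = 0"
     and nz: "\<exists>w\<in>t. u w \<noteq> 0"
    unfolding vs.dependent_explicit by blast
  define T where "T = {k\<in>{2..L}. v k \<in> t \<and> u (v k) \<noteq> 0}"
  have Tf: "finite T" by (simp add: T_def)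
  have Tne: "T \<noteq> {}"
  proof -
    obtain w where w: "w \<in> t" "u w \<noteq> 0" using nz by blast
    then obtain k where "k \<in> {2..L}" "w = v k" using t(2) by auto
    then have "k \<in> T" using w by (simp add: T_def)
    then show ?thesis by auto
  qed
  define m where "m = Max T"
  have mT: "m \<in> T" using Tf Tne m_def by simp
  have m2: "2 \<le> m" and vm: "v m \<in> t" and um: "u (v m) \<noteq> 0" using mT by (auto simp: T_def)
  have "0 = (\<Sum>w\<in>t. fscale (u w) w) m" using s by simp
  also have "\<dots> = (\<Sum>w\<in>t. u w * w m)" by (simp add: sum_fun_apply' fscale_def)
  also have "\<dots> = u (v m) * v m m + (\<Sum>w\<in>t - {v m}. u w * w m)"
    using t(1) vm by (simp add: sum.remove)
  also have "(\<Sum>w\<in>t - {v m}. u w * w m) = 0"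
  proof (rule sum.neutral, rule ballI)
    fix w assume w: "w \<in> t - {v m}"
    then obtain k where k: "k \<in> {2..L}" "w = v k" using t(2) by auto
    show "u w * w m = 0"
    proof (cases "u w = 0")
      case False
      then have "k \<in> T" using k w by (auto simp: T_def)
      then have "k \<le> m" using Tf m_def by simp
      moreover have "k \<noteq> m" using k w by auto
      ultimately have "k < m" by simp
      then have "w m = 0" using k m2 by (simp add: v_at)
      then show ?thesis by simp
    qed simp
  qed
  also have "v m m = 1" using m2 by (simp add: v_at)
  finally show False using um by simp
qed

lemma inj_v: "inj_on v {2..L}"
proof (rule inj_onI)
  fix j k assume j: "j \<in> {2..L}" and k: "k \<in> {2..L}" and e: "v j = v k"
  have k2: "2 \<le> k" using k by simp
  have kk: "k - 1 \<noteq> k" "k \<noteq> 1" using k2 by arith+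
  have "v k k = 1" using k2 kk by (simp add: v_at)
  moreover have "v j k = (if k = j then 1 else 0) - (if k = 1 then 1 else 0) - (if k = j - 1 then 1 else 0)"
    using j by (simp add: v_at)
  moreover note kk
  ultimately show "j = k" using e by (auto split: if_splits)
qed

lemma stoich:
  assumes L: "L \<ge> 2"
  shows "ccrn_stoich_dim L = L - 1"
  unfolding ccrn_stoich_dim_def
proof (rule vs.dim_unique[of "v ` {2..L}"])
  show "v ` {2..L} \<subseteq> (\<lambda>(y, y'). reaction_vector y y') ` ccrn_reactions L"
  proof
    fix w assume "w \<in> v ` {2..L}"
    then obtain k where k: "k \<in> {2..L}" "w = v k" by auto
    then show "w \<in> (\<lambda>(y, y'). reaction_vector y y') ` ccrn_reactions L"
      using v_in_R[of k L] unfolding v_def by force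
  qed
  show "(\<lambda>(y, y'). reaction_vector y y') ` ccrn_reactions L \<subseteq> vs.span (v ` {2..L})"
  proof
    fix w assume "w \<in> (\<lambda>(y, y'). reaction_vector y y') ` ccrn_reactions L"
    then obtain y y' where r: "(y, y') \<in> ccrn_reactions L" "w = reaction_vector y y'" by auto
    then have yW: "y \<in> width_le2_complexes L" "y' \<in> width_le2_complexes L"
      and sz: "cplx_size y = cplx_size y'" by (auto simp: ccrn_reactions_def)
    have "w = (g y' - fscale (real (cplx_size y')) (g {#1#})) - (g y - fscale (real (cplx_size y)) (g {#1#}))"
      using r sz by (simp add: rv_g)
    then show "w \<in> vs.span (v ` {2..L})"
      using W_span[OF yW(1)] W_span[OF yW(2)] by (simp add: vs.span_diff)
  qed
  show "vs.independent (v ` {2..L})" by (rule indep)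
  show "card (v ` {2..L}) = L - 1" using card_image[OF inj_v[of L]] by simp
qed


lemma arith_def:
  assumes L: "(L::nat) \<ge> 2"
  shows "int ((L + 1) * (L + 2) div 2 - 4) - int (2 * L - 3) - int (L - 1) = int ((L - 1) * (L - 2) div 2)"
proof -
  obtain n where n: "L = n + 2" using L by (metis add.commute le_Suc_ex)
  have e1: "(n + 3) * (n + 4) = n * (n + 1) + 2 * (3 * n + 6)" by (simp add: algebra_simps)
  have e2: "(n + 3) * (n + 4) div 2 = n * (n + 1) div 2 + (3 * n + 6)"
    unfolding e1 by simp
  have e3: "(L + 1) * (L + 2) = (n + 3) * (n + 4)" using n by (simp add: algebra_simps)
  have e4: "(L - 1) * (L - 2) = (n + 1) * n" using n by simp
  show ?thesis unfolding e3 e4 e2 using n by (simp add: mult.commute)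
qed

theorem mainTheorem13:
  fixes L :: nat
  assumes "L \<ge> 2"
  shows "card (ccrn_complexes L) = (L + 1) * (L + 2) div 2 - 4
       \<and> card (ccrn_linkage_classes L) = 2 * L - 3
       \<and> ccrn_stoich_dim L = L - 1
       \<and> ccrn_deficiency L = int ((L - 1) * (L - 2) div 2)"
  using card_CC[OF assms] card_LC[OF assms] stoich[OF assms] arith_def[OF assms]
  by (simp add: ccrn_deficiency_def)

end
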